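(* Let $(X,\tau)$ be an extended locally convex space with finest locally convex topology $\tau_F$, let $Y$ be a closed linear subspace of $(X,\tau)$, and let $\pi:X\to X/Y$, $\pi(x)=x+Y$, be the quotient map. Then the quotient topology $\pi(\tau_F)$ on $X/Y$ is the finest locally convex topology of the extended locally convex space $(X/Y,\pi(\tau))$. Moreover, $(X/Y,\pi(\tau))^*=(X/Y,\pi(\tau_F))^*$.
   Context: An extended seminorm on a vector space $X$ over $\mathbb{R}$ or $\mathbb{C}$ is a map $\rho:X\to[0,\infty]$ with $\rho(\alpha x)=|\alpha|\rho(x)$ and $\rho(x+y)\le\rho(x)+\rho(y)$. An extended locally convex space $(X,\tau)$ is a vector space with the topology induced by a family $\{\rho_i\}$ of extended seminorms (neighborhood base at $x_0$: $\{x:\max_{i\in J}\rho_i(x-x_0)<\varepsilon\}$, $J$ finite, $\varepsilon>0$). A locally convex topology is one induced in this way by finite-valued seminorms. The finest locally convex topology of an elcs $(X,\tau)$ is the locally convex topology $\tau_F\subseteq\tau$ such that every locally convex topology $\sigma\subseteq\tau$ on $X$ satisfies $\sigma\subseteq\tau_F$. For a topology $\eta$ on $X$, $\pi(\eta)$ denotes the quotient topology on $X/Y$ (the finest topology making $\pi$ continuous). $(Z,\sigma)^*$ denotes the set of $\sigma$-continuous linear functionals on $Z$. *)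

theory Defs
  imports "HOL-Analysis.Analysis"
begin

text \<open>A vector space is given by a carrier V, an addition and a scalar multiplication
  over a scalar field 'k (real or complex; |alpha| is norm alpha).\<close>

definition vsub :: "('v \<Rightarrow> 'v \<Rightarrow> 'v) \<Rightarrow> ('k::real_normed_field \<Rightarrow> 'v \<Rightarrow> 'v) \<Rightarrow> 'v \<Rightarrow> 'v \<Rightarrow> 'v" where
  "vsub add smul x y = add x (smul (-1) y)"

definition ext_seminorm :: "'v set \<Rightarrow> ('v \<Rightarrow> 'v \<Rightarrow> 'v) \<Rightarrow> ('k::real_normed_field \<Rightarrow> 'v \<Rightarrow> 'v) \<Rightarrow> ('v \<Rightarrow> ennreal) \<Rightarrow> bool" where
  "ext_seminorm V add smul \<rho> \<longleftrightarrow>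
     (\<forall>c. \<forall>x\<in>V. \<rho> (smul c x) = ennreal (norm c) * \<rho> x) \<and>
     (\<forall>x\<in>V. \<forall>y\<in>V. \<rho> (add x y) \<le> \<rho> x + \<rho> y)"

definition seminorm_topology :: "'v set \<Rightarrow> ('v \<Rightarrow> 'v \<Rightarrow> 'v) \<Rightarrow> ('k::real_normed_field \<Rightarrow> 'v \<Rightarrow> 'v) \<Rightarrow> ('v \<Rightarrow> ennreal) set \<Rightarrow> 'v topology" where
  "seminorm_topology V add smul P = topology (\<lambda>U. U \<subseteq> V \<and>
     (\<forall>x0\<in>U. \<exists>J \<epsilon>. finite J \<and> J \<subseteq> P \<and> \<epsilon> > (0::real) \<and>
        {x\<in>V. \<forall>\<rho>\<in>J. \<rho> (vsub add smul x x0) < ennreal \<epsilon>} \<subseteq> U))"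

definition is_elcs :: "'v set \<Rightarrow> ('v \<Rightarrow> 'v \<Rightarrow> 'v) \<Rightarrow> ('k::real_normed_field \<Rightarrow> 'v \<Rightarrow> 'v) \<Rightarrow> 'v topology \<Rightarrow> bool" where
  "is_elcs V add smul \<tau> \<longleftrightarrow>
     (\<exists>P. (\<forall>\<rho>\<in>P. ext_seminorm V add smul \<rho>) \<and> \<tau> = seminorm_topology V add smul P)"

definition is_lc :: "'v set \<Rightarrow> ('v \<Rightarrow> 'v \<Rightarrow> 'v) \<Rightarrow> ('k::real_normed_field \<Rightarrow> 'v \<Rightarrow> 'v) \<Rightarrow> 'v topology \<Rightarrow> bool" where
  "is_lc V add smul \<tau> \<longleftrightarrow>
     (\<exists>P. (\<forall>\<rho>\<in>P. ext_seminorm V add smul \<rho> \<and> (\<forall>x\<in>V. \<rho> x < \<infinity>)) \<and>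
          \<tau> = seminorm_topology V add smul P)"

definition coarser :: "'v topology \<Rightarrow> 'v topology \<Rightarrow> bool" where
  "coarser \<sigma> \<tau> \<longleftrightarrow> (\<forall>U. openin \<sigma> U \<longrightarrow> openin \<tau> U)"

definition is_finest_lc :: "'v set \<Rightarrow> ('v \<Rightarrow> 'v \<Rightarrow> 'v) \<Rightarrow> ('k::real_normed_field \<Rightarrow> 'v \<Rightarrow> 'v) \<Rightarrow> 'v topology \<Rightarrow> 'v topology \<Rightarrow> bool" where
  "is_finest_lc V add smul \<tau> \<tau>F \<longleftrightarrow>
     is_lc V add smul \<tau>F \<and> coarser \<tau>F \<tau> \<and>
     (\<forall>\<sigma>. is_lc V add smul \<sigma> \<and> coarser \<sigma> \<tau> \<longrightarrow> coarser \<sigma> \<tau>F)"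

definition quotient_top :: "('v \<Rightarrow> 'w) \<Rightarrow> 'v topology \<Rightarrow> 'w topology" where
  "quotient_top \<pi> \<eta> = topology (\<lambda>U. U \<subseteq> \<pi> ` topspace \<eta> \<and> openin \<eta> {x \<in> topspace \<eta>. \<pi> x \<in> U})"

definition cont_dual :: "'v set \<Rightarrow> ('v \<Rightarrow> 'v \<Rightarrow> 'v) \<Rightarrow> ('k::real_normed_field \<Rightarrow> 'v \<Rightarrow> 'v) \<Rightarrow> 'v topology \<Rightarrow> ('v \<Rightarrow> 'k) set" where
  "cont_dual V add smul \<sigma> = {f.
     (\<forall>x\<in>V. \<forall>y\<in>V. f (add x y) = f x + f y) \<and>
     (\<forall>c. \<forall>x\<in>V. f (smul c x) = c * f x) \<and>
     continuous_map \<sigma> euclidean f}"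

definition coset :: "'a::ab_group_add set \<Rightarrow> 'a \<Rightarrow> 'a set" where
  "coset Y x = (\<lambda>y. x + y) ` Y"

definition quot_add :: "'a::ab_group_add set \<Rightarrow> 'a set \<Rightarrow> 'a set" where
  "quot_add A B = {a + b | a b. a \<in> A \<and> b \<in> B}"

definition quot_smul :: "('k \<Rightarrow> 'a::ab_group_add \<Rightarrow> 'a) \<Rightarrow> 'a set \<Rightarrow> 'k \<Rightarrow> 'a set \<Rightarrow> 'a set" where
  "quot_smul sc Y c A = {sc c a + y | a y. a \<in> A \<and> y \<in> Y}"

end

theory Submission
  imports Defs
begin

lemma ennreal_add_Inf:
  fixes c :: ennreal
  assumes "B \<noteq> {}"
  shows "c + Inf B = (INF b\<in>B. c + b)"
  using continuous_at_Inf_mono[of "\<lambda>x. c + x" B]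
  using continuous_add[of "at_right (Inf B)" "\<lambda>x. c" "\<lambda>x. x"] assms
  by (auto simp: mono_def add_left_mono)

lemma ennreal_mult_Inf:
  fixes r :: real
  assumes "r > 0"
  shows "ennreal r * Inf S = (INF s\<in>S. ennreal r * s)"
proof (rule antisym)
  show "ennreal r * Inf S \<le> (INF s\<in>S. ennreal r * s)"
    by (rule INF_greatest) (simp add: Inf_lower mult_left_mono)
  let ?m = "(INF s\<in>S. ennreal r * s)"
  have inv: "ennreal (1/r) * (ennreal r * s) = s" for s
    using assms by (simp add: mult.assoc[symmetric] ennreal_mult[symmetric])
  have "ennreal (1/r) * ?m \<le> Inf S"
  proof (rule Inf_greatest)
    fix s assume "s \<in> S"
    then have "ennreal (1/r) * ?m \<le> ennreal (1/r) * (ennreal r * s)"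
      by (intro mult_left_mono INF_lower) auto
    then show "ennreal (1/r) * ?m \<le> s" using inv by simp
  qed
  then have "ennreal r * (ennreal (1/r) * ?m) \<le> ennreal r * Inf S"
    by (rule mult_left_mono) simp
  moreover have "ennreal r * (ennreal (1/r) * ?m) = ?m"
    using assms by (simp add: mult.assoc[symmetric] ennreal_mult[symmetric])
  ultimately show "?m \<le> ennreal r * Inf S" by simp
qed

lemma ennreal_Inf_add_Inf:
  fixes L :: ennreal
  assumes "\<And>a b. a \<in> A \<Longrightarrow> b \<in> B \<Longrightarrow> L \<le> a + b"
  shows "L \<le> Inf A + Inf B"
proof (cases "A = {} \<or> B = {}")
  case True then show ?thesis by (auto simp: top_ennreal_def[symmetric])
next
  case False
  have "L \<le> a + Inf B" if "a \<in> A" for a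
    using that assms False by (auto simp: ennreal_add_Inf intro!: INF_greatest)
  then have "L \<le> (INF a\<in>A. Inf B + a)"
    by (auto simp: add.commute intro!: INF_greatest)
  then have "L \<le> Inf B + Inf A"
    using False by (simp add: ennreal_add_Inf)
  then show ?thesis by (simp add: add.commute)
qed


definition mx :: "('a \<Rightarrow> ennreal) set \<Rightarrow> 'a \<Rightarrow> ennreal" where
  "mx J x = Max (insert 0 ((\<lambda>\<rho>. \<rho> x) ` J))"

definition qsn :: "('a \<Rightarrow> ennreal) \<Rightarrow> 'a set \<Rightarrow> ennreal" where
  "qsn p A = (INF a\<in>A. p a)"

definition quotQ :: "('a \<Rightarrow> ennreal) set \<Rightarrow> ('a set \<Rightarrow> ennreal) set" where
  "quotQ P = {qsn (mx J) | J. finite J \<and> J \<subseteq> P}"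

lemma mx_less: "finite J \<Longrightarrow> (0::real) < e \<Longrightarrow> mx J x < ennreal e \<longleftrightarrow> (\<forall>\<rho>\<in>J. \<rho> x < ennreal e)"
  by (simp add: mx_def)

lemma mx_ge: "finite J \<Longrightarrow> \<rho> \<in> J \<Longrightarrow> \<rho> x \<le> mx J x"
  by (simp add: mx_def)

lemma mx_fin: "finite J \<Longrightarrow> (\<forall>\<rho>\<in>J. \<rho> x < \<infinity>) \<Longrightarrow> mx J x < \<infinity>"
  by (simp add: mx_def)

lemma topspace_st: "topspace (seminorm_topology V add smul P) = V"
  and openin_st: "openin (seminorm_topology V add smul P) U \<longleftrightarrow> U \<subseteq> V \<and>
     (\<forall>x0\<in>U. \<exists>J \<epsilon>. finite J \<and> J \<subseteq> P \<and> \<epsilon> > (0::real) \<and>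
        {x\<in>V. \<forall>\<rho>\<in>J. \<rho> (vsub add smul x x0) < ennreal \<epsilon>} \<subseteq> U)"
proof -
  let ?L = "(\<lambda>U. U \<subseteq> V \<and>
     (\<forall>x0\<in>U. \<exists>J \<epsilon>. finite J \<and> J \<subseteq> P \<and> \<epsilon> > (0::real) \<and>
        {x\<in>V. \<forall>\<rho>\<in>J. \<rho> (vsub add smul x x0) < ennreal \<epsilon>} \<subseteq> U))"
  have i1: "?L (S \<inter> T)" if S: "?L S" and T: "?L T" for S T

    proof (intro conjI ballI)
      show "S \<inter> T \<subseteq> V" using S by auto
      fix x0 assume "x0 \<in> S \<inter> T"
      then have "x0 \<in> S" "x0 \<in> T" by auto
      obtain J1 e1 where 1: "finite J1" "J1 \<subseteq> P" "e1 > 0"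
        "{x\<in>V. \<forall>\<rho>\<in>J1. \<rho> (vsub add smul x x0) < ennreal e1} \<subseteq> S"
        using S \<open>x0 \<in> S\<close> by meson
      obtain J2 e2 where 2: "finite J2" "J2 \<subseteq> P" "e2 > 0"
        "{x\<in>V. \<forall>\<rho>\<in>J2. \<rho> (vsub add smul x x0) < ennreal e2} \<subseteq> T"
        using T \<open>x0 \<in> T\<close> by meson
      have "{x\<in>V. \<forall>\<rho>\<in>J1 \<union> J2. \<rho> (vsub add smul x x0) < ennreal (min e1 e2)} \<subseteq> S \<inter> T"
      proof -
        have a: "ennreal (min e1 e2) \<le> ennreal e1" "ennreal (min e1 e2) \<le> ennreal e2"
          by (auto intro: ennreal_leI)
        show ?thesis
        proof
          fix x assume x: "x \<in> {x\<in>V. \<forall>\<rho>\<in>J1 \<union> J2. \<rho> (vsub add smul x x0) < ennreal (min e1 e2)}"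
          then have "x \<in> {x\<in>V. \<forall>\<rho>\<in>J1. \<rho> (vsub add smul x x0) < ennreal e1}"
            using a(1) by (auto dest: order.strict_trans2)
          moreover have "x \<in> {x\<in>V. \<forall>\<rho>\<in>J2. \<rho> (vsub add smul x x0) < ennreal e2}"
            using x a(2) by (auto dest: order.strict_trans2)
          ultimately show "x \<in> S \<inter> T" using 1(4) 2(4) by blast
        qed
      qed
      then show "\<exists>J \<epsilon>. finite J \<and> J \<subseteq> P \<and> \<epsilon> > (0::real) \<and>
        {x\<in>V. \<forall>\<rho>\<in>J. \<rho> (vsub add smul x x0) < ennreal \<epsilon>} \<subseteq> S \<inter> T"
        using 1 2 by (intro exI[of _ "J1 \<union> J2"] exI[of _ "min e1 e2"]) auto
    qed
  have i2: "?L (\<Union>K)" if K: "\<forall>U\<in>K. ?L U" for K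

    proof (intro conjI ballI)
      show "\<Union>K \<subseteq> V" using K by auto
      fix x0 assume "x0 \<in> \<Union>K"
      then obtain U where "U \<in> K" "x0 \<in> U" by auto
      then obtain J e where "finite J" "J \<subseteq> P" "e > 0"
        "{x\<in>V. \<forall>\<rho>\<in>J. \<rho> (vsub add smul x x0) < ennreal e} \<subseteq> U"
        using K by meson
      then show "\<exists>J \<epsilon>. finite J \<and> J \<subseteq> P \<and> \<epsilon> > (0::real) \<and>
        {x\<in>V. \<forall>\<rho>\<in>J. \<rho> (vsub add smul x x0) < ennreal \<epsilon>} \<subseteq> \<Union>K"
        using \<open>U \<in> K\<close> by blast
    qed
  have "istopology ?L" unfolding istopology_def using i1 i2 by blast
  then have o: "openin (seminorm_topology V add smul P) = ?L"
    unfolding seminorm_topology_def by simp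
  then show "openin (seminorm_topology V add smul P) U \<longleftrightarrow> ?L U" by simp
  have "?L V" by (intro conjI ballI exI[of _ "{}"] exI[of _ "1::real"]) auto
  then show "topspace (seminorm_topology V add smul P) = V"
    unfolding topspace_def o by auto
qed

lemma topspace_qt: "topspace (quotient_top \<pi> \<eta>) = \<pi> ` topspace \<eta>"
  and openin_qt: "openin (quotient_top \<pi> \<eta>) U \<longleftrightarrow> U \<subseteq> \<pi> ` topspace \<eta> \<and> openin \<eta> {x \<in> topspace \<eta>. \<pi> x \<in> U}"
proof -
  let ?L = "\<lambda>U. U \<subseteq> \<pi> ` topspace \<eta> \<and> openin \<eta> {x \<in> topspace \<eta>. \<pi> x \<in> U}"
  have i1: "?L (S \<inter> T)" if "?L S" "?L T" for S T
  proof -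
    note that
    moreover have "{x \<in> topspace \<eta>. \<pi> x \<in> S \<inter> T} = {x \<in> topspace \<eta>. \<pi> x \<in> S} \<inter> {x \<in> topspace \<eta>. \<pi> x \<in> T}"
      by auto
    ultimately show "?L (S \<inter> T)"
      by (auto intro: openin_Int)
  qed
  have i2: "?L (\<Union>K)" if K: "\<forall>U\<in>K. ?L U" for K
  proof -
    have "{x \<in> topspace \<eta>. \<pi> x \<in> \<Union>K} = \<Union>((\<lambda>U. {x \<in> topspace \<eta>. \<pi> x \<in> U}) ` K)" by auto
    moreover have "openin \<eta> (\<Union>((\<lambda>U. {x \<in> topspace \<eta>. \<pi> x \<in> U}) ` K))"
      using K by (intro openin_Union) auto
    ultimately show "?L (\<Union>K)" using K by auto
  qed
  have "istopology ?L" unfolding istopology_def using i1 i2 by blast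
  then have o: "openin (quotient_top \<pi> \<eta>) = ?L"
    unfolding quotient_top_def by simp
  then show "openin (quotient_top \<pi> \<eta>) U \<longleftrightarrow> ?L U" by simp
  have "{x \<in> topspace \<eta>. \<pi> x \<in> \<pi> ` topspace \<eta>} = topspace \<eta>" by auto
  then have "?L (\<pi> ` topspace \<eta>)" by auto
  then show "topspace (quotient_top \<pi> \<eta>) = \<pi> ` topspace \<eta>"
    unfolding topspace_def o by auto
qed



lemma enn_add_lt:
  assumes "a < ennreal d" "0 \<le> r" "d + r \<le> e"
  shows "a + ennreal r < ennreal e"
proof (cases a)
  case (real s)
  then have "s < d" using assms(1) ennreal_less_iff by auto
  then have eq: "a + ennreal r = ennreal (s + r)" using real assms(2) by simp
  have "s + r < e" using \<open>s < d\<close> assms(3) by simp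
  then have "ennreal (s + r) < ennreal e" using real assms(2) by (intro ennreal_lessI) auto
  then show ?thesis using eq by metis
next
  case top then show ?thesis using assms(1) by simp
qed

lemma coarser_qt:
  assumes "topspace A = topspace B" "coarser A B"
  shows "coarser (quotient_top \<pi> A) (quotient_top \<pi> B)"
  using assms unfolding coarser_def openin_qt by auto

lemma cont_coarser:
  assumes "topspace A = topspace B" "coarser A B" "continuous_map A X f"
  shows "continuous_map B X f"
  using assms unfolding coarser_def continuous_map_def by auto

context
  fixes scale :: "'k::real_normed_field \<Rightarrow> 'a::ab_group_add \<Rightarrow> 'a" and Y :: "'a set"
  assumes vs: "vector_space scale" and sub: "module.subspace scale Y"
begin

interpretation V: vector_space scale by (rule vs)

lemma Y0: "0 \<in> Y" using V.subspace_0[OF sub] .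
lemma Yadd: "a \<in> Y \<Longrightarrow> b \<in> Y \<Longrightarrow> a + b \<in> Y" using V.subspace_add[OF sub] .
lemma Yscale: "a \<in> Y \<Longrightarrow> scale c a \<in> Y" using V.subspace_scale[OF sub] .

lemma vsub_eq: "vsub (+) scale x y = x - y"
  unfolding vsub_def by simp

lemma coset_mem: "x \<in> coset Y x"
  unfolding coset_def using Y0 by (auto intro: image_eqI[of _ _ 0])

lemma coset_add: "quot_add (coset Y x) (coset Y x') = coset Y (x + x')"
  unfolding quot_add_def coset_def
proof (intro equalityI subsetI)
  fix z assume "z \<in> {a + b |a b. a \<in> (+) x ` Y \<and> b \<in> (+) x' ` Y}"
  then obtain a b where "a \<in> Y" "b \<in> Y" "z = (x + a) + (x' + b)" by auto
  then show "z \<in> (+) (x + x') ` Y"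
    by (intro image_eqI[of _ _ "a + b"]) (auto simp: Yadd ac_simps)
next
  fix z assume "z \<in> (+) (x + x') ` Y"
  then obtain a where "a \<in> Y" "z = (x + a) + (x' + 0)" by (auto simp: ac_simps)
  then show "z \<in> {a + b |a b. a \<in> (+) x ` Y \<and> b \<in> (+) x' ` Y}" using Y0 by blast
qed

lemma coset_smul: "quot_smul scale Y c (coset Y x) = coset Y (scale c x)"
  unfolding quot_smul_def coset_def
proof (intro equalityI subsetI)
  fix z assume "z \<in> {scale c a + y |a y. a \<in> (+) x ` Y \<and> y \<in> Y}"
  then obtain a b where "a \<in> Y" "b \<in> Y" "z = scale c (x + a) + b" by auto
  then show "z \<in> (+) (scale c x) ` Y"
    by (intro image_eqI[of _ _ "scale c a + b"]) (auto simp: Yadd Yscale ac_simps V.scale_right_distrib)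
next
  fix z assume "z \<in> (+) (scale c x) ` Y"
  then obtain a where "a \<in> Y" "z = scale c (x + 0) + a" by (auto simp: ac_simps)
  then show "z \<in> {scale c a + y |a y. a \<in> (+) x ` Y \<and> y \<in> Y}" using Y0 by blast
qed

lemma coset_shift: "y \<in> Y \<Longrightarrow> coset Y (x + y) = coset Y x"
  unfolding coset_def
proof (intro equalityI subsetI)
  fix z assume "y \<in> Y" "z \<in> (+) (x + y) ` Y"
  then obtain a where "a \<in> Y" "z = x + (y + a)" by (auto simp: ac_simps)
  then show "z \<in> (+) x ` Y" using \<open>y \<in> Y\<close> by (auto intro: Yadd)
next
  fix z assume "y \<in> Y" "z \<in> (+) x ` Y"
  then obtain a where "a \<in> Y" "z = (x + y) + (a - y)" by auto
  moreover have "a - y \<in> Y" using \<open>a \<in> Y\<close> \<open>y \<in> Y\<close> V.subspace_diff[OF sub] by blast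
  ultimately show "z \<in> (+) (x + y) ` Y" by blast
qed

lemma vsub_q: "vsub quot_add (quot_smul scale Y) (coset Y x) (coset Y x0) = coset Y (x - x0)"
  unfolding vsub_def coset_smul coset_add by simp

lemma qsn_coset: "qsn p (coset Y z) = (INF y\<in>Y. p (z + y))"
  unfolding qsn_def coset_def by (simp add: image_image)

lemma sn_zero: "ext_seminorm UNIV (+) scale p \<Longrightarrow> p 0 = 0"
  unfolding ext_seminorm_def by (metis V.scale_zero_left mult_zero_left norm_zero ennreal_0 UNIV_I)

lemma qsn_sn:
  assumes p: "ext_seminorm UNIV (+) scale p"
  shows "ext_seminorm (range (coset Y)) quot_add (quot_smul scale Y) (qsn p)"
  unfolding ext_seminorm_def
proof (intro conjI ballI allI)
  fix c and A assume "A \<in> range (coset Y)"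
  then obtain x where A: "A = coset Y x" by auto
  show "qsn p (quot_smul scale Y c A) = ennreal (norm c) * qsn p A"
  proof (cases "c = 0")
    case True
    have "qsn p (quot_smul scale Y c A) \<le> p (0 + 0)"
      unfolding A coset_smul qsn_coset True V.scale_zero_left using Y0 by (rule INF_lower)
    then show ?thesis using sn_zero[OF p] True by simp
  next
    case False
    have img: "scale c ` Y = Y"
    proof
      show "scale c ` Y \<subseteq> Y" using Yscale by auto
      show "Y \<subseteq> scale c ` Y"
      proof
        fix y assume "y \<in> Y"
        then show "y \<in> scale c ` Y" using False
          by (intro image_eqI[of _ _ "scale (inverse c) y"]) (auto simp: Yscale)
      qed
    qed
    have "qsn p (quot_smul scale Y c A) = (INF y\<in>scale c ` Y. p (scale c x + y))"
      unfolding A coset_smul qsn_coset img ..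
    also have "\<dots> = (INF y\<in>Y. p (scale c (x + y)))"
      by (simp add: image_image V.scale_right_distrib)
    also have "\<dots> = (INF y\<in>Y. ennreal (norm c) * p (x + y))"
      using p unfolding ext_seminorm_def by simp
    also have "\<dots> = ennreal (norm c) * qsn p A"
      unfolding A qsn_coset using False by (subst ennreal_mult_Inf) (auto simp: image_image)
    finally show ?thesis .
  qed
next
  fix A B assume "A \<in> range (coset Y)" "B \<in> range (coset Y)"
  then obtain x x' where A: "A = coset Y x" and B: "B = coset Y x'" by auto
  have "qsn p (coset Y (x + x')) \<le> Inf ((\<lambda>y. p (x + y)) ` Y) + Inf ((\<lambda>y. p (x' + y)) ` Y)"
  proof (rule ennreal_Inf_add_Inf)
    fix a b assume "a \<in> (\<lambda>y. p (x + y)) ` Y" "b \<in> (\<lambda>y. p (x' + y)) ` Y"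
    then obtain y y' where "y \<in> Y" "y' \<in> Y" "a = p (x + y)" "b = p (x' + y')" by auto
    moreover have "qsn p (coset Y (x + x')) \<le> p (x + x' + (y + y'))"
      unfolding qsn_coset using calculation by (intro INF_lower Yadd)
    moreover have "p (x + x' + (y + y')) \<le> p (x + y) + p (x' + y')"
      using p unfolding ext_seminorm_def by (metis UNIV_I add.assoc add.left_commute)
    ultimately show "qsn p (coset Y (x + x')) \<le> a + b" by simp
  qed
  then show "qsn p (quot_add A B) \<le> qsn p A + qsn p B"
    unfolding A B coset_add qsn_coset by simp
qed

lemma qsn_fin:
  assumes "\<And>x. p x < \<infinity>" and Ar: "A \<in> range (coset Y)" shows "qsn p A < \<infinity>"
proof -
  obtain x where A: "A = coset Y x" using Ar by auto
  have "qsn p A \<le> p (x + 0)" unfolding A qsn_coset using Y0 by (rule INF_lower)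
  then show ?thesis using assms(1)[of "x + 0"] by simp
qed

lemma mx_sn:
  assumes "finite J" "\<forall>\<rho>\<in>J. ext_seminorm UNIV (+) scale \<rho>"
  shows "ext_seminorm UNIV (+) scale (mx J)"
  unfolding ext_seminorm_def
proof (intro conjI ballI allI)
  fix c :: 'k and x :: 'a
  have "mono (\<lambda>t. ennreal (norm c) * t)" by (rule monoI) (rule mult_left_mono; simp)
  then have "ennreal (norm c) * mx J x = Max ((\<lambda>t. ennreal (norm c) * t) ` insert 0 ((\<lambda>\<rho>. \<rho> x) ` J))"
    unfolding mx_def using assms(1) by (intro mono_Max_commute) auto
  also have "\<dots> = mx J (scale c x)"
    unfolding mx_def using assms(2) unfolding ext_seminorm_def by (simp add: image_image)
  finally show "mx J (scale c x) = ennreal (norm c) * mx J x" by simp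
next
  fix x y
  show "mx J (x + y) \<le> mx J x + mx J y"
    unfolding mx_def[of J "x + y"] using assms(1)
  proof (simp, intro ballI)
    fix \<rho> assume "\<rho> \<in> J"
    then have "\<rho> (x + y) \<le> \<rho> x + \<rho> y" using assms(2) unfolding ext_seminorm_def by blast
    also have "\<dots> \<le> mx J x + mx J y" using \<open>\<rho> \<in> J\<close> assms(1) by (intro add_mono mx_ge)
    finally show "\<rho> (x + y) \<le> mx J x + mx J y" .
  qed
qed


lemma L_quot:
  "quotient_top (coset Y) (seminorm_topology UNIV (+) scale P)
   = seminorm_topology (range (coset Y)) quot_add (quot_smul scale Y) (quotQ P)"
  unfolding topology_eq
proof (intro allI iffI)
  fix U
  assume "openin (quotient_top (coset Y) (seminorm_topology UNIV (+) scale P)) U"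
  then have U: "U \<subseteq> range (coset Y)" and
    pre: "openin (seminorm_topology UNIV (+) scale P) {x. coset Y x \<in> U}"
    unfolding openin_qt topspace_st by auto
  show "openin (seminorm_topology (range (coset Y)) quot_add (quot_smul scale Y) (quotQ P)) U"
    unfolding openin_st
  proof (intro conjI ballI U)
    fix A0 assume "A0 \<in> U"
    then obtain x0 where A0: "A0 = coset Y x0" using U by auto
    then have "x0 \<in> {x. coset Y x \<in> U}" using \<open>A0 \<in> U\<close> by simp
    then obtain J e where J: "finite J" "J \<subseteq> P" "e > 0"
      and sub: "{x. \<forall>\<rho>\<in>J. \<rho> (x - x0) < ennreal e} \<subseteq> {x. coset Y x \<in> U}"
      using pre unfolding openin_st vsub_eq by force
    have "{A \<in> range (coset Y). \<forall>q\<in>{qsn (mx J)}. q (vsub quot_add (quot_smul scale Y) A A0) < ennreal e} \<subseteq> U"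
    proof
      fix A assume "A \<in> {A \<in> range (coset Y). \<forall>q\<in>{qsn (mx J)}. q (vsub quot_add (quot_smul scale Y) A A0) < ennreal e}"
      then obtain x where A: "A = coset Y x" and lt: "qsn (mx J) (coset Y (x - x0)) < ennreal e"
        unfolding A0 by (auto simp: vsub_q)
      then obtain y where "y \<in> Y" "mx J (x - x0 + y) < ennreal e"
        unfolding qsn_coset INF_less_iff by auto
      then have "\<forall>\<rho>\<in>J. \<rho> ((x + y) - x0) < ennreal e"
      proof -
        have "x + y - x0 = x - x0 + y" by (simp add: algebra_simps)
        then show ?thesis using mx_less[OF J(1) J(3)] \<open>mx J (x - x0 + y) < ennreal e\<close> by metis
      qed
      then have "coset Y (x + y) \<in> U" using sub by auto
      moreover have "coset Y (x + y) = coset Y x"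
        using \<open>y \<in> Y\<close> by (rule coset_shift)
      ultimately show "A \<in> U" using A by simp
    qed
    moreover have "{qsn (mx J)} \<subseteq> quotQ P" using J unfolding quotQ_def by auto
    ultimately show "\<exists>J \<epsilon>. finite J \<and> J \<subseteq> quotQ P \<and> 0 < \<epsilon> \<and>
         {x \<in> range (coset Y). \<forall>\<rho>\<in>J. \<rho> (vsub quot_add (quot_smul scale Y) x A0) < ennreal \<epsilon>} \<subseteq> U"
      using J by (intro exI[of _ "{qsn (mx J)}"] exI[of _ e]) auto
  qed
next
  fix U
  assume "openin (seminorm_topology (range (coset Y)) quot_add (quot_smul scale Y) (quotQ P)) U"
  then have U: "U \<subseteq> range (coset Y)" and
    op: "\<forall>A0\<in>U. \<exists>J \<epsilon>. finite J \<and> J \<subseteq> quotQ P \<and> 0 < \<epsilon> \<and>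
         {x \<in> range (coset Y). \<forall>\<rho>\<in>J. \<rho> (vsub quot_add (quot_smul scale Y) x A0) < ennreal \<epsilon>} \<subseteq> U"
    unfolding openin_st by auto
  have "openin (seminorm_topology UNIV (+) scale P) {x. coset Y x \<in> U}"
    unfolding openin_st
  proof (intro conjI ballI)
    fix x0 assume "x0 \<in> {x. coset Y x \<in> U}"
    then have "coset Y x0 \<in> U" by simp
    from bspec[OF op this] obtain J' e where H: "finite J' \<and> J' \<subseteq> quotQ P \<and> 0 < e \<and> {x \<in> range (coset Y). \<forall>\<rho>\<in>J'. \<rho> (vsub quot_add (quot_smul scale Y) x (coset Y x0)) < ennreal e} \<subseteq> U"
      by iprover
    then have J': "finite J'" "J' \<subseteq> quotQ P" "0 < e"
      and sub: "{x \<in> range (coset Y). \<forall>\<rho>\<in>J'. \<rho> (vsub quot_add (quot_smul scale Y) x (coset Y x0)) < ennreal e} \<subseteq> U"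
      by auto
    have "\<forall>q\<in>J'. \<exists>J. q = qsn (mx J) \<and> finite J \<and> J \<subseteq> P"
      using J'(2) unfolding quotQ_def by blast
    then obtain g where g: "\<And>q. q \<in> J' \<Longrightarrow> q = qsn (mx (g q)) \<and> finite (g q) \<and> g q \<subseteq> P"
      by metis
    let ?J = "\<Union>(g ` J')"
    have "{x. \<forall>\<rho>\<in>?J. \<rho> (vsub (+) scale x x0) < ennreal e} \<subseteq> {x. coset Y x \<in> U}"
    proof
      fix x assume x: "x \<in> {x. \<forall>\<rho>\<in>?J. \<rho> (vsub (+) scale x x0) < ennreal e}"
      have "q (coset Y (x - x0)) < ennreal e" if "q \<in> J'" for q
      proof -
        have "q = qsn (mx (g q))" using g[OF that] by blast
        have "q (coset Y (x - x0)) = (INF y\<in>Y. mx (g q) (x - x0 + y))"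
          using fun_cong[OF \<open>q = qsn (mx (g q))\<close>, of "coset Y (x - x0)"] qsn_coset[of "mx (g q)" "x - x0"] by simp
        also have "\<dots> \<le> mx (g q) (x - x0 + 0)"
          by (rule INF_lower[OF Y0])
        also have "\<dots> < ennreal e"
          using g[OF that] x that \<open>0 < e\<close> by (auto simp: mx_less vsub_eq)
        finally show ?thesis .
      qed
      then show "x \<in> {x. coset Y x \<in> U}" using sub by (auto simp: vsub_q)
    qed
    then show "\<exists>J \<epsilon>. finite J \<and> J \<subseteq> P \<and> 0 < \<epsilon> \<and>
         {x \<in> UNIV. \<forall>\<rho>\<in>J. \<rho> (vsub (+) scale x x0) < ennreal \<epsilon>} \<subseteq> {x. coset Y x \<in> U}"
      using J' g by (intro exI[of _ ?J] exI[of _ e]) auto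
  qed auto
  then show "openin (quotient_top (coset Y) (seminorm_topology UNIV (+) scale P)) U"
    unfolding openin_qt topspace_st using U by auto
qed


lemma ball_open:
  assumes P: "\<forall>\<rho>\<in>P. ext_seminorm UNIV (+) scale \<rho>" and J: "finite J" "J \<subseteq> P" and e: "0 < e"
  shows "openin (seminorm_topology UNIV (+) scale P) {x. \<forall>\<rho>\<in>J. \<rho> (x - x0) < ennreal e}"
  unfolding openin_st
proof (intro conjI ballI)
  fix x1 assume x1: "x1 \<in> {x. \<forall>\<rho>\<in>J. \<rho> (x - x0) < ennreal e}"
  define r where "r \<rho> = enn2real (\<rho> (x1 - x0))" for \<rho>
  have rr: "\<rho> (x1 - x0) = ennreal (r \<rho>)" "r \<rho> < e" if "\<rho> \<in> J" for \<rho>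
  proof -
    have lt: "\<rho> (x1 - x0) < ennreal e" using x1 that by auto
    then have "\<rho> (x1 - x0) < top" using ennreal_less_top order.strict_trans by blast
    then show eq: "\<rho> (x1 - x0) = ennreal (r \<rho>)" unfolding r_def by simp
    show "r \<rho> < e" using lt unfolding eq by (simp add: ennreal_less_iff r_def)
  qed
  define d where "d = Min (insert e ((\<lambda>\<rho>. e - r \<rho>) ` J))"
  have d0: "0 < d" unfolding d_def using J(1) e rr(2) by auto
  have dle: "d \<le> e - r \<rho>" if "\<rho> \<in> J" for \<rho> unfolding d_def using J(1) that by auto
  have "{x \<in> UNIV. \<forall>\<rho>\<in>J. \<rho> (vsub (+) scale x x1) < ennreal d} \<subseteq> {x. \<forall>\<rho>\<in>J. \<rho> (x - x0) < ennreal e}"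
  proof (intro subsetI CollectI ballI)
    fix x \<rho> assume x: "x \<in> {x \<in> UNIV. \<forall>\<rho>\<in>J. \<rho> (vsub (+) scale x x1) < ennreal d}" and "\<rho> \<in> J"
    then have a: "\<rho> (x - x1) < ennreal d" by (auto simp: vsub_eq)
    have "\<rho> (x - x0) = \<rho> ((x - x1) + (x1 - x0))" by simp
    also have "\<dots> \<le> \<rho> (x - x1) + \<rho> (x1 - x0)"
      using P J(2) \<open>\<rho> \<in> J\<close> unfolding ext_seminorm_def by blast
    also have "\<dots> < ennreal e"
      unfolding rr(1)[OF \<open>\<rho> \<in> J\<close>] using a dle[OF \<open>\<rho> \<in> J\<close>] by (intro enn_add_lt) (auto simp: r_def)
    finally show "\<rho> (x - x0) < ennreal e" .
  qed
  then show "\<exists>J' \<epsilon>. finite J' \<and> J' \<subseteq> P \<and> 0 < \<epsilon> \<and>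
      {x \<in> UNIV. \<forall>\<rho>\<in>J'. \<rho> (vsub (+) scale x x1) < ennreal \<epsilon>} \<subseteq> {x. \<forall>\<rho>\<in>J. \<rho> (x - x0) < ennreal e}"
    using J d0 by blast
qed auto

lemma pb_sn:
  assumes "ext_seminorm (range (coset Y)) quot_add (quot_smul scale Y) q"
  shows "ext_seminorm UNIV (+) scale (q \<circ> coset Y)"
  using assms unfolding ext_seminorm_def by (simp add: coset_smul[symmetric] coset_add[symmetric])

lemma PB:
  "seminorm_topology (range (coset Y)) quot_add (quot_smul scale Y) Q
   = quotient_top (coset Y) (seminorm_topology UNIV (+) scale ((\<lambda>q. q \<circ> coset Y) ` Q))"
  unfolding topology_eq
proof (intro allI iffI)
  fix U
  assume "openin (seminorm_topology (range (coset Y)) quot_add (quot_smul scale Y) Q) U"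
  then have U: "U \<subseteq> range (coset Y)" and
    op: "\<forall>A0\<in>U. \<exists>J \<epsilon>. finite J \<and> J \<subseteq> Q \<and> 0 < \<epsilon> \<and>
         {x \<in> range (coset Y). \<forall>\<rho>\<in>J. \<rho> (vsub quot_add (quot_smul scale Y) x A0) < ennreal \<epsilon>} \<subseteq> U"
    unfolding openin_st by auto
  have "openin (seminorm_topology UNIV (+) scale ((\<lambda>q. q \<circ> coset Y) ` Q)) {x. coset Y x \<in> U}"
    unfolding openin_st
  proof (intro conjI ballI)
    fix x0 assume "x0 \<in> {x. coset Y x \<in> U}"
    then have "coset Y x0 \<in> U" by simp
    from bspec[OF op this] obtain J e where H: "finite J \<and> J \<subseteq> Q \<and> 0 < e \<and> {x \<in> range (coset Y). \<forall>\<rho>\<in>J. \<rho> (vsub quot_add (quot_smul scale Y) x (coset Y x0)) < ennreal e} \<subseteq> U"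
      by iprover
    then have J: "finite J" "J \<subseteq> Q" "0 < e"
      and sb: "{x \<in> range (coset Y). \<forall>\<rho>\<in>J. \<rho> (vsub quot_add (quot_smul scale Y) x (coset Y x0)) < ennreal e} \<subseteq> U"
      by auto
    have "{x \<in> UNIV. \<forall>\<rho>\<in>(\<lambda>q. q \<circ> coset Y) ` J. \<rho> (vsub (+) scale x x0) < ennreal e} \<subseteq> {x. coset Y x \<in> U}"
    proof
      fix x assume "x \<in> {x \<in> UNIV. \<forall>\<rho>\<in>(\<lambda>q. q \<circ> coset Y) ` J. \<rho> (vsub (+) scale x x0) < ennreal e}"
      then have "\<forall>\<rho>\<in>J. \<rho> (vsub quot_add (quot_smul scale Y) (coset Y x) (coset Y x0)) < ennreal e"
        by (simp add: vsub_q vsub_eq)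
      then show "x \<in> {x. coset Y x \<in> U}" using sb by auto
    qed
    then show "\<exists>J \<epsilon>. finite J \<and> J \<subseteq> (\<lambda>q. q \<circ> coset Y) ` Q \<and> 0 < \<epsilon> \<and>
         {x \<in> UNIV. \<forall>\<rho>\<in>J. \<rho> (vsub (+) scale x x0) < ennreal \<epsilon>} \<subseteq> {x. coset Y x \<in> U}"
      using J by (intro exI[of _ "(\<lambda>q. q \<circ> coset Y) ` J"] exI[of _ e]) auto
  qed auto
  then show "openin (quotient_top (coset Y) (seminorm_topology UNIV (+) scale ((\<lambda>q. q \<circ> coset Y) ` Q))) U"
    unfolding openin_qt topspace_st using U by auto
next
  fix U
  assume "openin (quotient_top (coset Y) (seminorm_topology UNIV (+) scale ((\<lambda>q. q \<circ> coset Y) ` Q))) U"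
  then have U: "U \<subseteq> range (coset Y)" and
    pre: "openin (seminorm_topology UNIV (+) scale ((\<lambda>q. q \<circ> coset Y) ` Q)) {x. coset Y x \<in> U}"
    unfolding openin_qt topspace_st by auto
  show "openin (seminorm_topology (range (coset Y)) quot_add (quot_smul scale Y) Q) U"
    unfolding openin_st
  proof (intro conjI ballI U)
    fix A0 assume "A0 \<in> U"
    then obtain x0 where A0: "A0 = coset Y x0" using U by auto
    then have "x0 \<in> {x. coset Y x \<in> U}" using \<open>A0 \<in> U\<close> by simp
    from pre[unfolded openin_st, THEN conjunct2, rule_format, OF this]
    obtain J'' e where H: "finite J'' \<and> J'' \<subseteq> (\<lambda>q. q \<circ> coset Y) ` Q \<and> 0 < e \<and>
        {x \<in> UNIV. \<forall>\<rho>\<in>J''. \<rho> (vsub (+) scale x x0) < ennreal e} \<subseteq> {x. coset Y x \<in> U}"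
      by iprover
    then obtain J where J: "finite J" "J \<subseteq> Q" "J'' = (\<lambda>q. q \<circ> coset Y) ` J"
      by (meson finite_subset_image)
    have "{A \<in> range (coset Y). \<forall>q\<in>J. q (vsub quot_add (quot_smul scale Y) A A0) < ennreal e} \<subseteq> U"
    proof
      fix A assume "A \<in> {A \<in> range (coset Y). \<forall>q\<in>J. q (vsub quot_add (quot_smul scale Y) A A0) < ennreal e}"
      then obtain x where A: "A = coset Y x" and lt: "\<forall>q\<in>J. q (coset Y (x - x0)) < ennreal e"
        unfolding A0 by (auto simp: vsub_q)
      then have "x \<in> {x \<in> UNIV. \<forall>\<rho>\<in>J''. \<rho> (vsub (+) scale x x0) < ennreal e}"
        using J(3) by (auto simp: vsub_eq)
      then show "A \<in> U" using H A by blast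
    qed
    then show "\<exists>J \<epsilon>. finite J \<and> J \<subseteq> Q \<and> 0 < \<epsilon> \<and>
         {x \<in> range (coset Y). \<forall>\<rho>\<in>J. \<rho> (vsub quot_add (quot_smul scale Y) x A0) < ennreal \<epsilon>} \<subseteq> U"
      using J H by (intro exI[of _ J] exI[of _ e]) auto
  qed
qed

lemma fvsub:
  assumes add: "\<forall>x\<in>range (coset Y). \<forall>y\<in>range (coset Y). f (quot_add x y) = f x + f y"
    and sm: "\<forall>c. \<forall>x\<in>range (coset Y). f (quot_smul scale Y c x) = c * f x"
    and A: "A \<in> range (coset Y)" and A0: "A0 \<in> range (coset Y)"
  shows "f (vsub quot_add (quot_smul scale Y) A A0) = f A - (f A0 :: 'k)"
proof -
  obtain x0 where x0: "A0 = coset Y x0" using A0 by auto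
  have B: "quot_smul scale Y (-1) A0 \<in> range (coset Y)" unfolding x0 coset_smul by simp
  have "f (quot_add A (quot_smul scale Y (-1) A0)) = f A + f (quot_smul scale Y (-1) A0)"
    using add A B by blast
  moreover have "f (quot_smul scale Y (-1) A0) = (-1) * f A0" using sm A0 by blast
  ultimately show ?thesis unfolding vsub_def by simp
qed

end


theorem theorem4p3:
  fixes scale :: "'k::{real_normed_field,banach} \<Rightarrow> 'a::ab_group_add \<Rightarrow> 'a"
    and \<tau> \<tau>F :: "'a topology"
    and Y :: "'a set"
  assumes "vector_space scale"
    and "is_elcs UNIV (+) scale \<tau>"
    and "is_finest_lc UNIV (+) scale \<tau> \<tau>F"
    and "module.subspace scale Y"
    and "closedin \<tau> Y"
  shows "is_elcs (range (coset Y)) quot_add (quot_smul scale Y) (quotient_top (coset Y) \<tau>)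
       \<and> is_finest_lc (range (coset Y)) quot_add (quot_smul scale Y)
            (quotient_top (coset Y) \<tau>) (quotient_top (coset Y) \<tau>F)
       \<and> cont_dual (range (coset Y)) quot_add (quot_smul scale Y) (quotient_top (coset Y) \<tau>)
         = cont_dual (range (coset Y)) quot_add (quot_smul scale Y) (quotient_top (coset Y) \<tau>F)"
proof -
  note vs = assms(1) and sub = assms(4)
  interpret V: vector_space scale by (rule vs)
  let ?R = "range (coset Y)" and ?qs = "quot_smul scale Y"
  from assms(2) obtain P where P: "\<forall>\<rho>\<in>P. ext_seminorm UNIV (+) scale \<rho>"
    and tau: "\<tau> = seminorm_topology UNIV (+) scale P"
    unfolding is_elcs_def by blast
  have a3: "is_lc UNIV (+) scale \<tau>F \<and> coarser \<tau>F \<tau> \<and>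
     (\<forall>\<sigma>. is_lc UNIV (+) scale \<sigma> \<and> coarser \<sigma> \<tau> \<longrightarrow> coarser \<sigma> \<tau>F)"
    using assms(3) unfolding is_finest_lc_def .
  note lcF = a3[THEN conjunct1] and cF = a3[THEN conjunct2, THEN conjunct1]
    and fin0 = a3[THEN conjunct2, THEN conjunct2]
  have fin: "coarser \<sigma> \<tau>F" if "is_lc UNIV (+) scale \<sigma>" "coarser \<sigma> \<tau>" for \<sigma>
    using fin0 that by blast
  from lcF obtain PF where PF: "\<forall>\<rho>\<in>PF. ext_seminorm UNIV (+) scale \<rho> \<and> (\<forall>x\<in>UNIV. \<rho> x < \<infinity>)"
    and tauF: "\<tau>F = seminorm_topology UNIV (+) scale PF"
    unfolding is_lc_def by blast
  have tsp: "topspace \<tau> = UNIV" "topspace \<tau>F = UNIV" unfolding tau tauF topspace_st by auto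
  have tsq: "topspace (quotient_top (coset Y) \<tau>) = ?R" "topspace (quotient_top (coset Y) \<tau>F) = ?R"
    unfolding topspace_qt tsp by auto
  have E1: "is_elcs ?R quot_add ?qs (quotient_top (coset Y) \<tau>)"
    unfolding is_elcs_def
  proof (intro exI[of _ "quotQ P"] conjI ballI)
    fix q assume "q \<in> quotQ P"
    then obtain J where q: "q = qsn (mx J)" "finite J" "J \<subseteq> P" unfolding quotQ_def by blast
    show "ext_seminorm ?R quot_add ?qs q"
      unfolding q(1) using P q(2,3) by (intro qsn_sn[OF vs sub] mx_sn[OF vs sub]) auto
  qed (simp add: tau L_quot[OF vs sub])
  have E2: "is_lc ?R quot_add ?qs (quotient_top (coset Y) \<tau>F)"
    unfolding is_lc_def
  proof (intro exI[of _ "quotQ PF"] conjI ballI)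
    fix q assume "q \<in> quotQ PF"
    then obtain J where q: "q = qsn (mx J)" "finite J" "J \<subseteq> PF" unfolding quotQ_def by blast
    show "ext_seminorm ?R quot_add ?qs q"
      unfolding q(1) using PF q(2,3) by (intro qsn_sn[OF vs sub] mx_sn[OF vs sub]) auto
    fix A assume "A \<in> ?R"
    show "q A < \<infinity>" unfolding q(1)
      by (rule qsn_fin[OF vs sub _ \<open>A \<in> ?R\<close>], rule mx_fin) (use PF q(2,3) in auto)
  qed (simp add: tauF L_quot[OF vs sub])
  have C: "coarser (quotient_top (coset Y) \<tau>F) (quotient_top (coset Y) \<tau>)"
    by (rule coarser_qt) (use tsp cF in auto)
  have Fin: "coarser \<sigma> (quotient_top (coset Y) \<tau>F)"
    if lc: "is_lc ?R quot_add ?qs \<sigma>" and cs: "coarser \<sigma> (quotient_top (coset Y) \<tau>)" for \<sigma>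
  proof -
    from lc obtain Q where Q: "\<forall>q\<in>Q. ext_seminorm ?R quot_add ?qs q \<and> (\<forall>x\<in>?R. q x < \<infinity>)"
      and sig: "\<sigma> = seminorm_topology ?R quot_add ?qs Q" unfolding is_lc_def by blast
    let ?P' = "(\<lambda>q. q \<circ> coset Y) ` Q"
    let ?s' = "seminorm_topology UNIV (+) scale ?P'"
    have sig': "\<sigma> = quotient_top (coset Y) ?s'" unfolding sig by (rule PB[OF vs sub])
    have P'sn: "\<forall>p\<in>?P'. ext_seminorm UNIV (+) scale p" using Q pb_sn[OF vs sub] by auto
    have lc': "is_lc UNIV (+) scale ?s'"
      unfolding is_lc_def using Q pb_sn[OF vs sub] by (intro exI[of _ ?P']) auto
    have c': "coarser ?s' \<tau>"
      unfolding coarser_def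
    proof (intro allI impI)
      fix U assume "openin ?s' U"
      show "openin \<tau> U"
      proof (subst openin_subopen, intro ballI)
        fix x0 assume "x0 \<in> U"
        from \<open>openin ?s' U\<close>[unfolded openin_st, THEN conjunct2, rule_format, OF this]
        obtain J e where H: "finite J \<and> J \<subseteq> ?P' \<and> 0 < e \<and>
          {x \<in> UNIV. \<forall>\<rho>\<in>J. \<rho> (vsub (+) scale x x0) < ennreal e} \<subseteq> U" by iprover
        then have J: "finite J" "J \<subseteq> ?P'" "0 < e" by auto
        define W where "W = {x. \<forall>\<rho>\<in>J. \<rho> (x - x0) < ennreal e}"
        have WU: "W \<subseteq> U" using H unfolding W_def by (auto simp: vsub_eq[OF vs sub])
        have Wo: "openin ?s' W" unfolding W_def using P'sn J by (intro ball_open[OF vs sub]) auto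
        have x0W: "x0 \<in> W" unfolding W_def
        proof (intro CollectI ballI)
          fix \<rho> assume "\<rho> \<in> J"
          then have "\<rho> 0 = 0" using P'sn J(2) sn_zero[OF vs sub] by blast
          then show "\<rho> (x0 - x0) < ennreal e" using J(3) by simp
        qed
        have sat: "{x \<in> topspace \<tau>. coset Y x \<in> coset Y ` W} = W"
        proof (intro equalityI subsetI)
          fix x assume "x \<in> {x \<in> topspace \<tau>. coset Y x \<in> coset Y ` W}"
          then obtain w where w: "w \<in> W" "coset Y x = coset Y w" by auto
          show "x \<in> W" unfolding W_def
          proof (intro CollectI ballI)
            fix \<rho> assume "\<rho> \<in> J"
            then obtain q where q: "\<rho> = q \<circ> coset Y" using J(2) by auto
            have "\<rho> (x - x0) = q (vsub quot_add ?qs (coset Y x) (coset Y x0))"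
              unfolding q by (simp add: vsub_q[OF vs sub])
            also have "\<dots> = \<rho> (w - x0)"
              unfolding q w(2) by (simp add: vsub_q[OF vs sub])
            finally show "\<rho> (x - x0) < ennreal e" using w(1) \<open>\<rho> \<in> J\<close> unfolding W_def by simp
          qed
        qed (auto simp: tsp)
        have "openin \<sigma> (coset Y ` W)"
          unfolding sig' openin_qt topspace_st
        proof
          show "coset Y ` W \<subseteq> coset Y ` UNIV" by auto
          have "{x \<in> UNIV. coset Y x \<in> coset Y ` W} = W" using sat tsp by simp
          then show "openin ?s' {x \<in> UNIV. coset Y x \<in> coset Y ` W}" using Wo by simp
        qed
        then have "openin (quotient_top (coset Y) \<tau>) (coset Y ` W)" using cs unfolding coarser_def by blast
        then have "openin \<tau> W" unfolding openin_qt sat by blast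
        then show "\<exists>T. openin \<tau> T \<and> x0 \<in> T \<and> T \<subseteq> U" using x0W WU by blast
      qed
    qed
    have "coarser ?s' \<tau>F" by (rule fin[OF lc' c'])
    then show "coarser \<sigma> (quotient_top (coset Y) \<tau>F)"
      unfolding sig' by (rule coarser_qt[rotated]) (simp add: topspace_st tsp)
  qed
  have D: "cont_dual ?R quot_add ?qs (quotient_top (coset Y) \<tau>)
         = cont_dual ?R quot_add ?qs (quotient_top (coset Y) \<tau>F)"
  proof (intro equalityI subsetI)
    fix f assume "f \<in> cont_dual ?R quot_add ?qs (quotient_top (coset Y) \<tau>F)"
    then show "f \<in> cont_dual ?R quot_add ?qs (quotient_top (coset Y) \<tau>)"
      unfolding cont_dual_def using cont_coarser[OF _ C] tsq by auto
  next
    fix f assume f: "f \<in> cont_dual ?R quot_add ?qs (quotient_top (coset Y) \<tau>)"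
    then have add: "\<forall>x\<in>?R. \<forall>y\<in>?R. f (quot_add x y) = f x + f y"
      and sm: "\<forall>c. \<forall>x\<in>?R. f (?qs c x) = c * f x"
      and ct: "continuous_map (quotient_top (coset Y) \<tau>) euclidean f"
      unfolding cont_dual_def by auto
    have fv: "f (vsub quot_add ?qs A A0) = f A - f A0" if "A \<in> ?R" "A0 \<in> ?R" for A A0
      by (rule fvsub[OF vs sub add sm that])
    let ?nf = "\<lambda>A. ennreal (norm (f A))"
    let ?\<sigma> = "seminorm_topology ?R quot_add ?qs {?nf}"
    have nfsn: "ext_seminorm ?R quot_add ?qs ?nf"
      unfolding ext_seminorm_def
    proof (intro conjI ballI allI)
      fix c x assume "x \<in> ?R"
      then have "f (?qs c x) = c * f x" using sm by blast
      then show "?nf (?qs c x) = ennreal (norm c) * ?nf x"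
        by (simp add: norm_mult ennreal_mult)
    next
      fix x y assume "x \<in> ?R" "y \<in> ?R"
      then have "f (quot_add x y) = f x + f y" using add by blast
      then have "?nf (quot_add x y) = ennreal (norm (f x + f y))" by simp
      also have "\<dots> \<le> ennreal (norm (f x) + norm (f y))" by (intro ennreal_leI norm_triangle_ineq)
      also have "\<dots> = ?nf x + ?nf y" by simp
      finally show "?nf (quot_add x y) \<le> ?nf x + ?nf y" .
    qed
    have lcs: "is_lc ?R quot_add ?qs ?\<sigma>"
      unfolding is_lc_def using nfsn by (intro exI[of _ "{?nf}"]) auto
    have cs: "coarser ?\<sigma> (quotient_top (coset Y) \<tau>)"
      unfolding coarser_def
    proof (intro allI impI)
      fix U assume Uo: "openin ?\<sigma> U"
      then have UR: "U \<subseteq> ?R" unfolding openin_st by blast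
      show "openin (quotient_top (coset Y) \<tau>) U"
      proof (subst openin_subopen, intro ballI)
        fix A0 assume "A0 \<in> U"
        from Uo[unfolded openin_st, THEN conjunct2, rule_format, OF this]
        obtain J e where H: "finite J \<and> J \<subseteq> {?nf} \<and> 0 < e \<and>
          {x \<in> ?R. \<forall>\<rho>\<in>J. \<rho> (vsub quot_add ?qs x A0) < ennreal e} \<subseteq> U" by iprover
        define T where "T = {A \<in> topspace (quotient_top (coset Y) \<tau>). f A \<in> ball (f A0) e}"
        have "openin (quotient_top (coset Y) \<tau>) T"
          unfolding T_def using ct unfolding continuous_map_def by auto
        moreover have "A0 \<in> T" unfolding T_def tsq using \<open>A0 \<in> U\<close> UR H by auto
        moreover have "T \<subseteq> U"
        proof
          fix A assume "A \<in> T"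
          then have A: "A \<in> ?R" "dist (f A0) (f A) < e" unfolding T_def tsq by auto
          have "\<forall>\<rho>\<in>J. \<rho> (vsub quot_add ?qs A A0) < ennreal e"
          proof
            fix \<rho> assume "\<rho> \<in> J"
            then have "\<rho> = ?nf" using H by auto
            then have "\<rho> (vsub quot_add ?qs A A0) = ennreal (dist (f A0) (f A))"
              using fv[OF A(1)] \<open>A0 \<in> U\<close> UR by (auto simp: dist_norm norm_minus_commute)
            then show "\<rho> (vsub quot_add ?qs A A0) < ennreal e" using A(2) H by (auto intro!: ennreal_lessI)
          qed
          then show "A \<in> U" using H A(1) by blast
        qed
        ultimately show "\<exists>T. openin (quotient_top (coset Y) \<tau>) T \<and> A0 \<in> T \<and> T \<subseteq> U" by blast
      qed
    qed
    have csF: "coarser ?\<sigma> (quotient_top (coset Y) \<tau>F)" by (rule Fin[OF lcs cs])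
    have "continuous_map (quotient_top (coset Y) \<tau>F) euclidean f"
      unfolding continuous_map_def
    proof (intro conjI allI impI)
      show "f \<in> topspace (quotient_top (coset Y) \<tau>F) \<rightarrow> topspace euclidean" by simp
      fix W :: "'k set" assume "openin euclidean W"
      then have W: "open W" by simp
      have "openin ?\<sigma> {x \<in> topspace (quotient_top (coset Y) \<tau>F). f x \<in> W}"
        unfolding openin_st tsq
      proof (intro conjI ballI)
        fix A0 assume A0: "A0 \<in> {x \<in> ?R. f x \<in> W}"
        then obtain e where e: "0 < e" "ball (f A0) e \<subseteq> W" using W open_contains_ball by blast
        have "{x \<in> ?R. \<forall>\<rho>\<in>{?nf}. \<rho> (vsub quot_add ?qs x A0) < ennreal e} \<subseteq> {x \<in> ?R. f x \<in> W}"
        proof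
          fix A assume "A \<in> {x \<in> ?R. \<forall>\<rho>\<in>{?nf}. \<rho> (vsub quot_add ?qs x A0) < ennreal e}"
          then have A: "A \<in> ?R" "ennreal (norm (f A - f A0)) < ennreal e" using fv A0 by auto
          then have "norm (f A - f A0) < e" by (simp add: ennreal_less_iff)
          then have "f A \<in> ball (f A0) e" by (simp add: dist_norm norm_minus_commute)
          then show "A \<in> {x \<in> ?R. f x \<in> W}" using e A by auto
        qed
        then show "\<exists>J \<epsilon>. finite J \<and> J \<subseteq> {?nf} \<and> 0 < \<epsilon> \<and>
          {x \<in> ?R. \<forall>\<rho>\<in>J. \<rho> (vsub quot_add ?qs x A0) < ennreal \<epsilon>} \<subseteq> {x \<in> ?R. f x \<in> W}"
          using e by (intro exI[of _ "{?nf}"] exI[of _ e]) auto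
      qed auto
      then show "openin (quotient_top (coset Y) \<tau>F) {x \<in> topspace (quotient_top (coset Y) \<tau>F). f x \<in> W}"
        using csF unfolding coarser_def by blast
    qed
    then show "f \<in> cont_dual ?R quot_add ?qs (quotient_top (coset Y) \<tau>F)"
      unfolding cont_dual_def using add sm by auto
  qed
  have F: "is_finest_lc ?R quot_add ?qs (quotient_top (coset Y) \<tau>) (quotient_top (coset Y) \<tau>F)"
    unfolding is_finest_lc_def
  proof (intro conjI allI impI)
    fix \<sigma> assume "is_lc ?R quot_add ?qs \<sigma> \<and> coarser \<sigma> (quotient_top (coset Y) \<tau>)"
    then show "coarser \<sigma> (quotient_top (coset Y) \<tau>F)" using Fin by (elim conjE)
  qed (rule E2, rule C)
  show ?thesis
    by (intro conjI E1 F D)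
qed

end
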